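(* Let $d\ge1$. For integers $0\le m\le n$, $0\le j\le m/2$ and $1\le\ell\le\dim\mathcal H_{m-2j}^d$, $$e^{t}\big(\partial_{tt}-\Delta_x\big)\big[e^{-t}Q_{m,j,\ell}^{n,-1}(x,t)\big] = a_{m,j}\Big(Q_{m,j,\ell}^{n,0}(x,t)-b_{m,n}\,Q_{m-2,j-1,\ell}^{n,0}(x,t)\Big),$$ where $a_{m,j}=\frac{2m-2j+d-2}{2m+d-2}$ (with $a_{0,0}=1$ when $d=2$) and $b_{m,n}=(n-m+1)(n-m+2)$, and $Q_{m-2,j-1,\ell}^{n,0}:=0$ when $j=0$.
   Context: $\Delta_x$ is the Laplacian in $x\in\mathbb R^d$. For real $\alpha$ define $L_n^{\alpha}(t)=\sum_{k=0}^n \frac{(\alpha+k+1)_{n-k}}{(n-k)!}\frac{(-t)^k}{k!}$, and for real $\alpha,\beta$ define $P_n^{(\alpha,\beta)}(s)=\sum_{k=0}^n \frac{(\alpha+k+1)_{n-k}(n+\alpha+\beta+1)_k}{k!\,(n-k)!}\left(\frac{s-1}{2}\right)^k$ (classical Laguerre and Jacobi polynomials, extended polynomially in the parameters; in particular $P_0^{(-1,\beta)}=1$); $(a)_k$ is the Pochhammer symbol. For an integer $p\ge0$, $\mathcal H_p^d$ is the space of homogeneous harmonic polynomials of degree $p$ in $d$ variables (for $d=1$: $\mathcal H_0^1=\mathrm{span}\{1\}$, $\mathcal H_1^1=\mathrm{span}\{x\}$, $\mathcal H_p^1=\{0\}$ for $p\ge2$), and $\{Y_\ell^p\}$ is an orthonormal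 basis of it with respect to the normalized surface measure on $\mathbb S^{d-1}$. For $\mu\ge-1$ and integers $0\le m\le n$, $0\le j\le m/2$, $1\le\ell\le\dim\mathcal H^d_{m-2j}$, $$Q_{m,j,\ell}^{n,\mu}(x,t)=L_{n-m}^{2m+2\mu+d}(t)\,t^{2j}\,P_j^{(\mu,\,m-2j+\frac{d-2}{2})}\!\left(2\frac{\|x\|^2}{t^2}-1\right)Y_\ell^{m-2j}(x).$$ *)

theory Defs
  imports "HOL-Analysis.Analysis"
begin

definition laguerre :: "nat \<Rightarrow> real \<Rightarrow> real \<Rightarrow> real" where
  "laguerre n \<alpha> t = (\<Sum>k\<le>n. pochhammer (\<alpha> + real k + 1) (n - k) / fact (n - k)
                                * (-t) ^ k / fact k)"

definition jacobi :: "nat \<Rightarrow> real \<Rightarrow> real \<Rightarrow> real \<Rightarrow> real" where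
  "jacobi n \<alpha> \<beta> s = (\<Sum>k\<le>n. pochhammer (\<alpha> + real k + 1) (n - k)
        * pochhammer (real n + \<alpha> + \<beta> + 1) k / (fact k * fact (n - k)) * ((s - 1) / 2) ^ k)"

text \<open>The polynomial (in r = |x|^2 and t) t^(2j) P_j^(alpha,beta)(2 r / t^2 - 1),
  written without division so that it is also meaningful (the polynomial value) at t = 0.\<close>
definition hjacobi :: "nat \<Rightarrow> real \<Rightarrow> real \<Rightarrow> real \<Rightarrow> real \<Rightarrow> real" where
  "hjacobi j \<alpha> \<beta> r t = (\<Sum>k\<le>j. pochhammer (\<alpha> + real k + 1) (j - k)
        * pochhammer (real j + \<alpha> + \<beta> + 1) k / (fact k * fact (j - k))
        * (r - t\<^sup>2) ^ k * t ^ (2 * (j - k)))"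

lemma hjacobi_eq:
  assumes "t \<noteq> 0"
  shows "t ^ (2 * j) * jacobi j \<alpha> \<beta> (2 * r / t\<^sup>2 - 1) = hjacobi j \<alpha> \<beta> r t"
proof -
  have "t ^ (2 * j) * ((2 * r / t\<^sup>2 - 1 - 1) / 2) ^ k = (r - t\<^sup>2) ^ k * t ^ (2 * (j - k))"
    if "k \<le> j" for k
  proof -
    have e: "(2 * r / t\<^sup>2 - 1 - 1) / 2 = (r - t\<^sup>2) / t\<^sup>2" using assms
      by (simp add: field_simps)
    have "2 * j = 2 * (j - k) + 2 * k" using that by simp
    then have "t ^ (2 * j) = t ^ (2 * (j - k)) * (t\<^sup>2) ^ k"
      by (metis power_add power_mult)
    have "(t\<^sup>2) ^ k * ((r - t\<^sup>2) / t\<^sup>2) ^ k = (r - t\<^sup>2) ^ k" using assms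
      by (simp add: power_divide)
    then show ?thesis unfolding e using \<open>t ^ (2 * j) = _\<close>
      by (metis mult.assoc mult.commute)
  qed
  then show ?thesis
    unfolding jacobi_def hjacobi_def sum_distrib_left
    by (intro sum.cong) (auto simp: algebra_simps)
qed

definition pdiff :: "'n::finite \<Rightarrow> (real^'n \<Rightarrow> real) \<Rightarrow> real^'n \<Rightarrow> real" where
  "pdiff i f x = deriv (\<lambda>s. f (x + s *\<^sub>R axis i 1)) 0"

definition laplacian :: "(real^'n::finite \<Rightarrow> real) \<Rightarrow> real^'n \<Rightarrow> real" where
  "laplacian f x = (\<Sum>i\<in>UNIV. pdiff i (pdiff i f) x)"

definition harmonic_hom :: "nat \<Rightarrow> (real^'n::finite \<Rightarrow> real) set" where
  "harmonic_hom p = {Y. (\<exists>c :: ('n \<Rightarrow> nat) \<Rightarrow> real.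
        \<forall>x. Y x = (\<Sum>\<alpha>\<in>{\<alpha>. sum \<alpha> UNIV = p}. c \<alpha> * (\<Prod>i\<in>UNIV. (x $ i) ^ \<alpha> i)))
      \<and> (\<forall>x. laplacian Y x = 0)}"

text \<open>Q^{n,mu}_{m,j,l}(x,t) with the harmonic polynomial Y = Y_l^{m-2j} as a parameter.\<close>
definition Qpoly :: "nat \<Rightarrow> nat \<Rightarrow> nat \<Rightarrow> real \<Rightarrow> (real^'n::finite \<Rightarrow> real) \<Rightarrow> real^'n \<Rightarrow> real \<Rightarrow> real" where
  "Qpoly n m j \<mu> Y x t =
     laguerre (n - m) (2 * real m + 2 * \<mu> + real CARD('n)) t
     * hjacobi j \<mu> (real m - 2 * real j + (real CARD('n) - 2) / 2) ((norm x)\<^sup>2) t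
     * Y x"

definition acoef :: "nat \<Rightarrow> nat \<Rightarrow> nat \<Rightarrow> real" where
  "acoef d m j = (if m = 0 \<and> d = 2 then 1
     else (2 * real m - 2 * real j + real d - 2) / (2 * real m + real d - 2))"

definition bcoef :: "nat \<Rightarrow> nat \<Rightarrow> real" where
  "bcoef m n = (real n - real m + 1) * (real n - real m + 2)"

end

theory Submission
  imports Defs
begin

definition lc :: "nat \<Rightarrow> real \<Rightarrow> nat \<Rightarrow> real" where
  "lc N a k = (if k \<le> N then pochhammer (a + real k + 1) (N - k) / fact (N - k) * (-1) ^ k / fact k else 0)"

lemma laguerre_lc: "laguerre N a t = (\<Sum>k\<le>N. lc N a k * t ^ k)"
  unfolding laguerre_def lc_def
  by (intro sum.cong) (auto simp: power_minus')

lemma laguerre_lc_ext: assumes "N \<le> M" shows "laguerre N a t = (\<Sum>k\<le>M. lc N a k * t ^ k)"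
proof -
  have "(\<Sum>k\<le>M. lc N a k * t ^ k) = (\<Sum>k\<le>N. lc N a k * t ^ k)"
    by (rule sum.mono_neutral_right) (use assms in \<open>auto simp: lc_def\<close>)
  then show ?thesis by (simp add: laguerre_lc)
qed

lemma lc_der: "real (Suc k) * lc N a (Suc k) = lc N a k - lc N (a + 1) k"
proof (cases "k \<le> N")
  case True
  show ?thesis
  proof (cases "k = N")
    case True then show ?thesis by (simp add: lc_def)
  next
    case False
    then obtain q where q: "N = k + Suc q" using \<open>k \<le> N\<close> by (metis add_Suc_right le_neq_implies_less less_imp_Suc_add)
    have e1: "N - k = Suc q" "N - Suc k = q" using q by auto
    have p1: "pochhammer (a + real k + 1) (Suc q) = (a + real k + 1) * pochhammer (a + real k + 2) q"
      by (simp add: pochhammer_rec add.assoc)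
    have p2: "pochhammer (a + 1 + real k + 1) (Suc q) = pochhammer (a + real k + 2) q * (a + real k + 2 + real q)"
      by (simp add: pochhammer_rec' algebra_simps)
    have p3: "pochhammer (a + real (Suc k) + 1) q = pochhammer (a + real k + 2) q"
      by (simp add: algebra_simps)
    define P where "P = pochhammer (a + real k + 2) q"
    have A: "lc N a (Suc k) = P / fact q * (- ((-1) ^ k)) / (real (Suc k) * fact k)"
      unfolding lc_def P_def using q e1 p3 by (simp add: fact_Suc)
    have B: "lc N a k = (a + real k + 1) * P / (real (Suc q) * fact q) * (-1) ^ k / fact k"
      unfolding lc_def P_def using q e1 p1 by (simp add: fact_Suc)
    have C: "lc N (a+1) k = P * (a + real k + 2 + real q) / (real (Suc q) * fact q) * (-1) ^ k / fact k"
      unfolding lc_def P_def using q e1 p2 by (simp add: fact_Suc algebra_simps)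
    have fq: "fact q \<noteq> (0::real)" "fact k \<noteq> (0::real)" "real (Suc q) \<noteq> 0" "1 + real q \<noteq> 0" "real q + 1 \<noteq> 0" by auto
    define S where "S = ((-1::real) ^ k)"
    define X where "X = P / (real (Suc q) * fact q) * S / fact k"
    have B': "lc N a k = (a + real k + 1) * X" unfolding B X_def S_def by simp
    have C': "lc N (a+1) k = (a + real k + 2 + real q) * X" unfolding C X_def S_def by simp
    have D0: "lc N a k - lc N (a+1) k = - (real (Suc q) * X)" unfolding B' C' by (simp add: algebra_simps)
    have D: "lc N a k - lc N (a+1) k = - (P * S / (fact q * fact k))"
      unfolding D0 X_def using fq by (simp add: field_simps del: of_nat_Suc)
    show ?thesis unfolding D A S_def[symmetric] using fq by (simp add: field_simps del: of_nat_Suc)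
  qed
next
  case False then show ?thesis by (simp add: lc_def)
qed

lemma lc_R1: "lc (Suc M) a k = lc (Suc M) (a + 1) k - lc M (a + 1) k"
proof (cases "k \<le> M")
  case True
  then obtain q where q: "M = k + q" using le_Suc_ex by blast
  have e1: "Suc M - k = Suc q" "M - k = q" using q by auto
  define P where "P = pochhammer (a + real k + 2) q"
  define S where "S = ((-1::real) ^ k)"
  have p1: "pochhammer (a + real k + 1) (Suc q) = (a + real k + 1) * P"
    unfolding P_def by (simp add: pochhammer_rec add.assoc)
  have p2: "pochhammer (a + 1 + real k + 1) (Suc q) = P * (a + real k + 2 + real q)"
    unfolding P_def by (simp add: pochhammer_rec' algebra_simps)
  have p3: "pochhammer (a + 1 + real k + 1) q = P"
    unfolding P_def by (simp add: algebra_simps)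
  define X where "X = P / (real (Suc q) * fact q) * S / fact k"
  have fq: "fact q \<noteq> (0::real)" "fact k \<noteq> (0::real)" "real (Suc q) \<noteq> 0" by auto
  have B': "lc (Suc M) a k = (a + real k + 1) * X" unfolding lc_def X_def S_def using True e1 p1
    by (simp add: fact_Suc del: of_nat_Suc)
  have C': "lc (Suc M) (a+1) k = (a + real k + 2 + real q) * X" unfolding lc_def X_def S_def using True e1 p2
    by (simp add: fact_Suc del: of_nat_Suc)
  have E: "lc M (a+1) k = P * S / (fact q * fact k)" unfolding lc_def S_def using True e1 p3
    by simp
  have D0: "lc (Suc M) (a+1) k - lc M (a+1) k = (a + real k + 2 + real q) * X - real (Suc q) * X"
    unfolding C' E X_def using fq by (simp add: field_simps del: of_nat_Suc)
  show ?thesis unfolding D0 B' by (simp add: algebra_simps)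
next
  case False
  then show ?thesis
    by (cases "k = Suc M") (auto simp: lc_def)
qed

lemma sum_shift_der:
  assumes "f (Suc N) = 0"
  shows "(\<Sum>k\<le>N. f k * (real k * t ^ (k - 1))) = (\<Sum>i\<le>N. real (Suc i) * f (Suc i) * t ^ i)"
proof -
  have "(\<Sum>k\<le>N. f k * (real k * t ^ (k - 1))) = (\<Sum>k\<le>Suc N. f k * (real k * t ^ (k - 1)))"
    using assms by simp
  also have "\<dots> = (\<Sum>i\<le>N. f (Suc i) * (real (Suc i) * t ^ i))"
    by (subst sum.atMost_Suc_shift) simp
  finally show ?thesis by (simp add: algebra_simps)
qed

lemma laguerre_deriv: "DERIV (laguerre N a) t :> laguerre N a t - laguerre N (a + 1) t"
proof -
  have d: "\<And>k. DERIV (\<lambda>t. lc N a k * t ^ k) t :> lc N a k * (real k * t ^ (k - 1))"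
    by (auto intro!: derivative_eq_intros simp: algebra_simps)
  have "DERIV (\<lambda>t. \<Sum>k\<le>N. lc N a k * t ^ k) t :> (\<Sum>k\<le>N. lc N a k * (real k * t ^ (k - 1)))"
    by (rule DERIV_sum[OF d])
  moreover have "(\<Sum>k\<le>N. lc N a k * (real k * t ^ (k - 1))) = laguerre N a t - laguerre N (a + 1) t"
  proof -
    have "(\<Sum>k\<le>N. lc N a k * (real k * t ^ (k - 1))) = (\<Sum>i\<le>N. real (Suc i) * lc N a (Suc i) * t ^ i)"
      by (rule sum_shift_der) (simp add: lc_def)
    also have "\<dots> = (\<Sum>i\<le>N. lc N a i * t ^ i - lc N (a + 1) i * t ^ i)"
      unfolding lc_der by (simp add: left_diff_distrib)
    finally show ?thesis unfolding laguerre_lc sum_subtractf .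
  qed
  ultimately show ?thesis unfolding laguerre_lc[abs_def] by simp
qed

lemma laguerre_R1: "laguerre (Suc M) a t = laguerre (Suc M) (a + 1) t - laguerre M (a + 1) t"
proof -
  have e: "laguerre M (a + 1) t = (\<Sum>k\<le>Suc M. lc M (a + 1) k * t ^ k)"
    by (rule laguerre_lc_ext) simp
  show ?thesis unfolding e laguerre_lc[of "Suc M"] sum_subtractf[symmetric]
    by (intro sum.cong refl) (simp only: lc_R1[of M a] left_diff_distrib)
qed

lemma lc_R2_0: "(real N + a + 1) * lc N a 0 - real (Suc N) * lc (Suc N) a 0 = 0"
proof -
  have "pochhammer (a + 1) (Suc N) = (a + 1 + real N) * pochhammer (a + 1) N"
    by (simp add: pochhammer_rec')
  moreover have "fact (Suc N) = real (Suc N) * (fact N :: real)" by (simp add: fact_Suc del: of_nat_Suc)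
  ultimately show ?thesis unfolding lc_def by (simp add: field_simps del: of_nat_Suc)
qed

lemma lc_R2: "(real N + a + 1) * lc N a (Suc i) - real (Suc N) * lc (Suc N) a (Suc i) = lc N (a + 1) i"
proof (cases "i < N")
  case True
  then obtain q where q: "N = i + Suc q" by (metis add_Suc_right less_imp_Suc_add)
  have e1: "N - Suc i = q" "Suc N - Suc i = Suc q" "N - i = Suc q" using q by auto
  define P where "P = pochhammer (a + real i + 2) q"
  define S where "S = ((-1::real) ^ i)"
  define Z where "Z = a + real i + 2 + real q"
  have p1: "pochhammer (a + real (Suc i) + 1) q = P" unfolding P_def by (simp add: algebra_simps)
  have p2: "pochhammer (a + real (Suc i) + 1) (Suc q) = P * Z"
    unfolding P_def Z_def by (simp add: pochhammer_rec' algebra_simps)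
  have p3: "pochhammer (a + 1 + real i + 1) (Suc q) = P * Z"
    unfolding P_def Z_def by (simp add: pochhammer_rec' algebra_simps)
  have fq: "fact q \<noteq> (0::real)" "fact i \<noteq> (0::real)" "real (Suc q) \<noteq> 0" "real (Suc i) \<noteq> 0" by auto
  have A: "lc N a (Suc i) = - (P * S / (fact q * (real (Suc i) * fact i)))"
    unfolding lc_def S_def using True e1 p1 by (simp add: fact_Suc del: of_nat_Suc)
  have B: "lc (Suc N) a (Suc i) = - (P * Z * S / (real (Suc q) * fact q * (real (Suc i) * fact i)))"
    unfolding lc_def S_def using True e1 p2 by (simp add: fact_Suc del: of_nat_Suc)
  have C: "lc N (a + 1) i = P * Z * S / (real (Suc q) * fact q * fact i)"
    unfolding lc_def S_def using True e1 p3 by (simp add: fact_Suc del: of_nat_Suc)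
  have NN: "real N + a + 1 = Z" "real (Suc N) = real (Suc q) + real (Suc i)" unfolding Z_def q by auto
  show ?thesis unfolding A B C NN using fq
    by (simp add: field_simps del: of_nat_Suc)
next
  case False
  then show ?thesis
  proof (cases "i = N")
    case True
    have "fact (Suc N) = real (Suc N) * (fact N :: real)" by (simp add: fact_Suc del: of_nat_Suc)
    then show ?thesis unfolding lc_def using True by (simp add: field_simps del: of_nat_Suc)
  next
    case False
    then show ?thesis using \<open>\<not> i < N\<close> by (auto simp: lc_def)
  qed
qed

lemma laguerre_R2: "t * laguerre N (a + 1) t = (real N + a + 1) * laguerre N a t - real (Suc N) * laguerre (Suc N) a t"
proof -
  have "(real N + a + 1) * laguerre N a t - real (Suc N) * laguerre (Suc N) a t
      = (\<Sum>k\<le>Suc N. ((real N + a + 1) * lc N a k - real (Suc N) * lc (Suc N) a k) * t ^ k)"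
    unfolding laguerre_lc_ext[of N "Suc N" a, OF le_SucI[OF order.refl]] laguerre_lc[of "Suc N"]
    by (simp add: sum_distrib_left sum_subtractf[symmetric] algebra_simps)
  also have "\<dots> = (\<Sum>i\<le>N. lc N (a + 1) i * t ^ Suc i)"
    by (subst sum.atMost_Suc_shift) (unfold lc_R2_0 lc_R2, simp)
  also have "\<dots> = t * laguerre N (a + 1) t"
    unfolding laguerre_lc by (simp add: sum_distrib_left algebra_simps)
  finally show ?thesis by simp
qed

lemma laguerre_Lb:
  "t^2 * laguerre N (g + 2) t - 2 * g * t * laguerre N (g + 1) t + g * (g - 1) * laguerre N g t
   = real (Suc N) * real (Suc (Suc N)) * laguerre (Suc (Suc N)) (g - 2) t"
proof -
  have i1: "t * laguerre N (g + 2) t = (real N + g + 2) * laguerre N (g+1) t - real (Suc N) * laguerre (Suc N) (g+1) t"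
    using laguerre_R2[of t N "g+1"] by (simp add: algebra_simps)
  have i2: "t * laguerre N (g + 1) t = (real N + g + 1) * laguerre N g t - real (Suc N) * laguerre (Suc N) g t"
    using laguerre_R2[of t N "g"] by (simp add: algebra_simps)
  have i3: "t * laguerre (Suc N) (g + 1) t = (real N + g + 2) * laguerre (Suc N) g t - real (Suc (Suc N)) * laguerre (Suc (Suc N)) g t"
    using laguerre_R2[of t "Suc N" "g"] by (simp add: algebra_simps)
  have i4: "laguerre (Suc (Suc N)) (g - 2) t = laguerre (Suc (Suc N)) (g - 1) t - laguerre (Suc N) (g - 1) t"
    using laguerre_R1[of "Suc N" "g - 2" t] by (simp add: algebra_simps)
  have i5: "laguerre (Suc (Suc N)) (g - 1) t = laguerre (Suc (Suc N)) g t - laguerre (Suc N) g t"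
    using laguerre_R1[of "Suc N" "g - 1" t] by (simp add: algebra_simps)
  have i6: "laguerre (Suc N) (g - 1) t = laguerre (Suc N) g t - laguerre N g t"
    using laguerre_R1[of "N" "g - 1" t] by (simp add: algebra_simps)
  have "t^2 * laguerre N (g + 2) t = t * (t * laguerre N (g + 2) t)" by (simp add: power2_eq_square)
  also have "\<dots> = (real N + g + 2) * (t * laguerre N (g+1) t) - real (Suc N) * (t * laguerre (Suc N) (g+1) t)"
    unfolding i1 by (simp add: algebra_simps)
  finally have i7: "t^2 * laguerre N (g + 2) t = (real N + g + 2) * ((real N + g + 1) * laguerre N g t - real (Suc N) * laguerre (Suc N) g t)
     - real (Suc N) * ((real N + g + 2) * laguerre (Suc N) g t - real (Suc (Suc N)) * laguerre (Suc (Suc N)) g t)"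
    unfolding i2 i3 .
  have "2 * g * t * laguerre N (g + 1) t = 2 * g * (t * laguerre N (g + 1) t)" by simp
  also have "\<dots> = 2 * g * ((real N + g + 1) * laguerre N g t - real (Suc N) * laguerre (Suc N) g t)"
    unfolding i2 ..
  finally have i8: "2 * g * t * laguerre N (g + 1) t = 2 * g * ((real N + g + 1) * laguerre N g t - real (Suc N) * laguerre (Suc N) g t)" .
  show ?thesis unfolding i7 i8 i4 i5 i6 by (simp add: algebra_simps)
qed

definition hv :: "nat \<Rightarrow> (nat \<Rightarrow> real) \<Rightarrow> real \<Rightarrow> real \<Rightarrow> real" where
  "hv J c w s = (\<Sum>k\<le>J. c k * w ^ k * s ^ (J - k))"

definition vb :: "nat \<Rightarrow> (nat \<Rightarrow> real) \<Rightarrow> bool" where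
  "vb J c \<longleftrightarrow> (\<forall>k>J. c k = 0)"

definition dw :: "(nat \<Rightarrow> real) \<Rightarrow> nat \<Rightarrow> real" where
  "dw c k = real (Suc k) * c (Suc k)"

definition ds :: "nat \<Rightarrow> (nat \<Rightarrow> real) \<Rightarrow> nat \<Rightarrow> real" where
  "ds J c k = real (J - k) * c k"

lemma hv_cong: "(\<And>k. k \<le> J \<Longrightarrow> c k = d k) \<Longrightarrow> hv J c w s = hv J d w s"
  unfolding hv_def by (intro sum.cong) auto

lemma hv_lin: "a * hv J c w s + b * hv J d w s = hv J (\<lambda>k. a * c k + b * d k) w s"
  unfolding hv_def by (simp add: sum_distrib_left sum.distrib[symmetric] algebra_simps)

lemma hv_scale: "a * hv J c w s = hv J (\<lambda>k. a * c k) w s"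
  unfolding hv_def by (simp add: sum_distrib_left algebra_simps)

lemma hv_sum1: "(\<Sum>k\<le>J. c k * real (J - k) * w ^ k * s ^ (J - k - 1)) = hv (J - 1) (ds J c) w s"
proof (cases J)
  case 0 then show ?thesis by (simp add: hv_def ds_def)
next
  case (Suc K)
  have "(\<Sum>k\<le>J. c k * real (J - k) * w ^ k * s ^ (J - k - 1)) = (\<Sum>k\<le>K. c k * real (J - k) * w ^ k * s ^ (J - k - 1))"
    using Suc by simp
  also have "\<dots> = hv (J - 1) (ds J c) w s"
    unfolding hv_def ds_def using Suc by (intro sum.cong) (auto simp: algebra_simps Suc_diff_le)
  finally show ?thesis .
qed

lemma hv_sum2: assumes "vb J c"
  shows "(\<Sum>k\<le>J. c k * real k * w ^ (k - 1) * s ^ (J - k)) = hv (J - 1) (dw c) w s"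
proof (cases J)
  case 0 then show ?thesis using assms by (simp add: hv_def dw_def vb_def)
next
  case (Suc K)
  show ?thesis unfolding Suc
    by (subst sum.atMost_Suc_shift) (simp add: hv_def dw_def algebra_simps)
qed

lemma hv_t: assumes "vb J c"
  shows "DERIV (\<lambda>t. hv J c (r - t\<^sup>2) (t\<^sup>2)) t :> 2 * t * hv (J - 1) (\<lambda>k. ds J c k - dw c k) (r - t\<^sup>2) (t\<^sup>2)"
proof -
  have d: "\<And>k. DERIV (\<lambda>t. c k * (r - t\<^sup>2) ^ k * (t\<^sup>2) ^ (J - k)) t :>
     2 * t * (c k * real (J - k) * (r - t\<^sup>2) ^ k * (t\<^sup>2) ^ (J - k - 1)
               - c k * real k * (r - t\<^sup>2) ^ (k - 1) * (t\<^sup>2) ^ (J - k))"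
    by (auto intro!: derivative_eq_intros simp: algebra_simps)
  have "DERIV (\<lambda>t. hv J c (r - t\<^sup>2) (t\<^sup>2)) t :>
     (\<Sum>k\<le>J. 2 * t * (c k * real (J - k) * (r - t\<^sup>2) ^ k * (t\<^sup>2) ^ (J - k - 1)
               - c k * real k * (r - t\<^sup>2) ^ (k - 1) * (t\<^sup>2) ^ (J - k)))"
    unfolding hv_def by (rule DERIV_sum[OF d])
  moreover have "(\<Sum>k\<le>J. 2 * t * (c k * real (J - k) * (r - t\<^sup>2) ^ k * (t\<^sup>2) ^ (J - k - 1)
               - c k * real k * (r - t\<^sup>2) ^ (k - 1) * (t\<^sup>2) ^ (J - k)))
     = 2 * t * ((\<Sum>k\<le>J. c k * real (J - k) * (r - t\<^sup>2) ^ k * (t\<^sup>2) ^ (J - k - 1))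
               - (\<Sum>k\<le>J. c k * real k * (r - t\<^sup>2) ^ (k - 1) * (t\<^sup>2) ^ (J - k)))"
    by (subst sum_distrib_left[symmetric]) (simp only: sum_subtractf)
  moreover have "hv (J - 1) (\<lambda>k. ds J c k - dw c k) (r - t\<^sup>2) (t\<^sup>2)
      = hv (J - 1) (ds J c) (r - t\<^sup>2) (t\<^sup>2) - hv (J - 1) (dw c) (r - t\<^sup>2) (t\<^sup>2)"
    unfolding hv_def by (simp add: sum_subtractf[symmetric] algebra_simps)
  ultimately show ?thesis unfolding hv_sum1 hv_sum2[OF assms] by simp
qed

lemma hv_r: assumes "vb J c"
  shows "DERIV (\<lambda>r. hv J c (r - a) s) r :> hv (J - 1) (dw c) (r - a) s"
proof -
  have d: "\<And>k. DERIV (\<lambda>r. c k * (r - a) ^ k * s ^ (J - k)) r :> c k * real k * (r - a) ^ (k - 1) * s ^ (J - k)"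
    by (auto intro!: derivative_eq_intros simp: algebra_simps)
  have "DERIV (\<lambda>r. hv J c (r - a) s) r :> (\<Sum>k\<le>J. c k * real k * (r - a) ^ (k - 1) * s ^ (J - k))"
    unfolding hv_def by (rule DERIV_sum[OF d])
  then show ?thesis unfolding hv_sum2[OF assms] .
qed

lemma vb_dw: "vb J c \<Longrightarrow> vb (J - 1) (dw c)"
  unfolding vb_def dw_def by auto

lemma vb_dsdw: "vb J c \<Longrightarrow> vb (J - 1) (\<lambda>k. ds J c k - dw c k)"
  unfolding vb_def dw_def ds_def by auto

lemma hv_s: assumes "E J = 0" shows "s * hv (J - 1) E w s = hv J E w s"
proof (cases J)
  case 0 then show ?thesis using assms by (simp add: hv_def)
next
  case (Suc K)
  have "hv J E w s = (\<Sum>k\<le>K. E k * w ^ k * s ^ (Suc K - k))" unfolding hv_def using assms Suc by simp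
  also have "\<dots> = s * hv K E w s" unfolding hv_def sum_distrib_left
    by (intro sum.cong) (auto simp: Suc_diff_le algebra_simps)
  finally show ?thesis using Suc by simp
qed

lemma hv_w: assumes "E J = 0" shows "w * hv (J - 1) E w s = hv J (\<lambda>k. if k = 0 then 0 else E (k - 1)) w s"
proof (cases J)
  case 0 then show ?thesis using assms by (simp add: hv_def)
next
  case (Suc K)
  show ?thesis unfolding Suc hv_def
    by (subst sum.atMost_Suc_shift) (simp add: sum_distrib_left algebra_simps)
qed

definition jc :: "nat \<Rightarrow> real \<Rightarrow> real \<Rightarrow> nat \<Rightarrow> real" where
  "jc J \<mu> \<beta> k = (if k \<le> J then pochhammer (\<mu> + real k + 1) (J - k) * pochhammer (real J + \<mu> + \<beta> + 1) k
       / (fact k * fact (J - k)) else 0)"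

lemma hjacobi_hv: "hjacobi J \<mu> \<beta> r t = hv J (jc J \<mu> \<beta>) (r - t\<^sup>2) (t\<^sup>2)"
  unfolding hjacobi_def hv_def jc_def
  by (intro sum.cong) (auto simp: power_mult)

lemma vb_jc: "vb J (jc J \<mu> \<beta>)"
  unfolding vb_def jc_def by auto

lemma jcm1: "jc (Suc J') (-1) \<beta> k = (if k \<le> Suc J' then pochhammer (real k) (Suc J' - k) * pochhammer (real (Suc J') + \<beta>) k
       / (fact k * fact (Suc J' - k)) else 0)"
  unfolding jc_def by (simp add: algebra_simps)

lemma jc0: "jc J 0 \<beta> k = (if k \<le> J then pochhammer (real k + 1) (J - k) * pochhammer (real J + \<beta> + 1) k
       / (fact k * fact (J - k)) else 0)"
  unfolding jc_def by simp

context
  fixes J' k q :: nat and \<beta> c :: real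
  assumes kq: "J' = k + q" and cdef: "c = real (Suc J') + \<beta>"
begin

lemma c1: "real J' + \<beta> + 1 = c" "real (Suc J') + \<beta> = c" "real (Suc J') + \<beta> + 1 = c + 1"
  using cdef by auto

definition "PP = pochhammer c k"
definition "QQ = pochhammer (real k + 1) q"

lemma Bk: "jc J' 0 \<beta> k = QQ * PP / (fact k * fact q)"
  unfolding jc0 c1 PP_def QQ_def using kq by simp

lemma r1: "jc (Suc J') (-1) \<beta> k * real (Suc q) = real k * jc J' 0 \<beta> k"
proof -
  have e: "Suc J' - k = Suc q" using kq by auto
  have p: "pochhammer (real k) (Suc q) = real k * QQ" unfolding QQ_def by (simp add: pochhammer_rec)
  have "jc (Suc J') (-1) \<beta> k = real k * QQ * PP / (fact k * (real (Suc q) * fact q))"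
    unfolding jcm1 c1 e p PP_def using kq by (simp add: fact_Suc del: of_nat_Suc)
  then show ?thesis unfolding Bk by (simp add: field_simps del: of_nat_Suc)
qed

lemma r2: "jc (Suc J') (-1) \<beta> (Suc k) * real (Suc k) = (c + real k) * jc J' 0 \<beta> k"
proof -
  have e: "Suc J' - Suc k = q" using kq by auto
  have p: "pochhammer c (Suc k) = (c + real k) * PP" unfolding PP_def by (simp add: pochhammer_rec')
  have "jc (Suc J') (-1) \<beta> (Suc k) = QQ * ((c + real k) * PP) / (real (Suc k) * fact k * fact q)"
    unfolding jcm1 c1 e p QQ_def using kq by (simp add: fact_Suc algebra_simps)
  then show ?thesis unfolding Bk by (simp add: field_simps del: of_nat_Suc)
qed

lemma r3: "jc (Suc J') (-1) \<beta> (Suc (Suc k)) * (real (Suc k))^2 * real (Suc (Suc k))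
    = (c + real k) * (c + real k + 1) * real q * jc J' 0 \<beta> k"
proof (cases q)
  case 0 then show ?thesis using kq by (simp add: jc_def)
next
  case (Suc q')
  have e: "Suc J' - Suc (Suc k) = q'" using kq Suc by auto
  define R where "R = pochhammer (real k + 2) q'"
  have p: "pochhammer c (Suc (Suc k)) = (c + real k + 1) * ((c + real k) * PP)" unfolding PP_def
    by (simp add: pochhammer_rec' algebra_simps)
  have pq: "QQ = (real k + 1) * R" unfolding QQ_def R_def by (simp add: Suc pochhammer_rec algebra_simps)
  have A: "jc (Suc J') (-1) \<beta> (Suc (Suc k)) = R * ((c + real k + 1) * ((c + real k) * PP)) / (real (Suc (Suc k)) * (real (Suc k) * fact k) * fact q')"
    unfolding jcm1 c1 e p R_def using kq Suc by (simp add: algebra_simps fact_Suc)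
  have B: "jc J' 0 \<beta> k = real (Suc k) * R * PP / (fact k * (real (Suc q') * fact q'))"
    unfolding Bk pq using Suc by (simp add: fact_Suc)
  show ?thesis unfolding A B using Suc by (simp add: field_simps power2_eq_square del: of_nat_Suc)
qed

lemma r4: "jc J' 0 \<beta> (Suc k) * (real (Suc k))^2 = (c + real k) * real q * jc J' 0 \<beta> k"
proof (cases q)
  case 0 then show ?thesis using kq by (simp add: jc_def)
next
  case (Suc q')
  have e: "J' - Suc k = q'" using kq Suc by auto
  define R where "R = pochhammer (real k + 2) q'"
  have p: "pochhammer c (Suc k) = (c + real k) * PP" unfolding PP_def
    by (simp add: pochhammer_rec' algebra_simps)
  have pq: "QQ = (real k + 1) * R" unfolding QQ_def R_def by (simp add: Suc pochhammer_rec algebra_simps)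
  have A: "jc J' 0 \<beta> (Suc k) = R * ((c + real k) * PP) / ((real (Suc k) * fact k) * fact q')"
    unfolding jc0 c1 e p R_def using kq Suc by (simp add: algebra_simps fact_Suc)
  have B: "jc J' 0 \<beta> k = real (Suc k) * R * PP / (fact k * (real (Suc q') * fact q'))"
    unfolding Bk pq using Suc by (simp add: fact_Suc)
  show ?thesis unfolding A B using Suc by (simp add: field_simps power2_eq_square del: of_nat_Suc)
qed

lemma r5: "c * real (Suc q) * jc (Suc J') 0 \<beta> k = real (k + q + 1) * (c + real k) * jc J' 0 \<beta> k"
proof -
  have e: "Suc J' - k = Suc q" using kq by auto
  have p1: "pochhammer (real k + 1) (Suc q) = (real k + 1 + real q) * QQ" unfolding QQ_def by (simp add: pochhammer_rec')
  have p2: "c * pochhammer (c + 1) k = (c + real k) * PP" unfolding PP_def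
    by (metis pochhammer_rec pochhammer_rec')
  have "jc (Suc J') 0 \<beta> k = (real k + 1 + real q) * QQ * pochhammer (c + 1) k / (fact k * (real (Suc q) * fact q))"
    unfolding jc0 c1 e p1 using kq by (simp add: fact_Suc del: of_nat_Suc)
  then have "c * real (Suc q) * jc (Suc J') 0 \<beta> k = (real k + 1 + real q) * QQ * (c * pochhammer (c + 1) k) / (fact k * fact q)"
    by (simp add: field_simps del: of_nat_Suc)
  also have "\<dots> = (real k + 1 + real q) * QQ * ((c + real k) * PP) / (fact k * fact q)"
    unfolding p2 ..
  also have "\<dots> = real (k + q + 1) * (c + real k) * jc J' 0 \<beta> k"
    unfolding Bk by (simp add: field_simps)
  finally show ?thesis .
qed

end

lemma r6: "(real j + \<beta>) * jc j 0 \<beta> j = (real j + \<beta> + real j) * jc j (-1) \<beta> j"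
proof -
  have "(real j + \<beta>) * pochhammer (real j + \<beta> + 1) j = (real j + \<beta> + real j) * pochhammer (real j + \<beta>) j"
    by (metis pochhammer_rec pochhammer_rec')
  then show ?thesis unfolding jc_def by (simp add: algebra_simps)
qed

definition mon :: "('n::finite \<Rightarrow> nat) \<Rightarrow> real^'n \<Rightarrow> real" where
  "mon \<alpha> x = (\<Prod>i\<in>UNIV. (x $ i) ^ \<alpha> i)"

definition Rm :: "('n::finite \<Rightarrow> nat) \<Rightarrow> 'n \<Rightarrow> real^'n \<Rightarrow> real" where
  "Rm \<alpha> i x = (\<Prod>k\<in>UNIV - {i}. (x $ k) ^ \<alpha> k)"

lemma line_comp: "(y + s *\<^sub>R axis i 1) $ k = y $ k + (if k = i then s else 0)"
  by (simp add: axis_def)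

lemma Rm_line: "Rm \<alpha> i (y + s *\<^sub>R axis i (1::real)) = Rm \<alpha> i y"
  unfolding Rm_def by (intro prod.cong) (auto simp: axis_def)

lemma mon_split: "mon \<alpha> x = (x $ i) ^ \<alpha> i * Rm \<alpha> i x"
  unfolding mon_def Rm_def by (simp add: prod.remove)

lemma mon_line: "mon \<alpha> (y + s *\<^sub>R axis i (1::real)) = (y $ i + s) ^ \<alpha> i * Rm \<alpha> i y"
  by (simp add: mon_split[of _ _ i] Rm_line line_comp)

lemma pdiff_eq: "((\<lambda>s. f (y + s *\<^sub>R axis i 1)) has_real_derivative D) (at 0) \<Longrightarrow> pdiff i f y = D"
  unfolding pdiff_def by (rule DERIV_imp_deriv)

lemma harm:
  fixes Y :: "real^'n::finite \<Rightarrow> real"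
  assumes "Y \<in> harmonic_hom p"
  obtains Y1 Y2 where
    "\<And>i y. ((\<lambda>s. Y (y + s *\<^sub>R axis i 1)) has_real_derivative Y1 i y) (at 0)"
    "\<And>i y. ((\<lambda>s. Y1 i (y + s *\<^sub>R axis i 1)) has_real_derivative Y2 i y) (at 0)"
    "\<And>y. (\<Sum>i\<in>UNIV. Y2 i y) = 0"
    "\<And>y. (\<Sum>i\<in>UNIV. y $ i * Y1 i y) = real p * Y y"
proof -
  define S where "S = {\<alpha>::'n \<Rightarrow> nat. sum \<alpha> UNIV = p}"
  from assms obtain cf where Yeq: "\<And>x. Y x = (\<Sum>\<alpha>\<in>S. cf \<alpha> * mon \<alpha> x)"
    and lap: "\<And>x. laplacian Y x = 0"
    unfolding harmonic_hom_def S_def mon_def by blast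
  define Y1 where "Y1 i y = (\<Sum>\<alpha>\<in>S. cf \<alpha> * (real (\<alpha> i) * (y $ i) ^ (\<alpha> i - 1) * Rm \<alpha> i y))" for i y
  define Y2 where "Y2 i y = (\<Sum>\<alpha>\<in>S. cf \<alpha> * (real (\<alpha> i) * real (\<alpha> i - 1) * (y $ i) ^ (\<alpha> i - 1 - 1) * Rm \<alpha> i y))" for i y
  have d1: "((\<lambda>s. Y (y + s *\<^sub>R axis i 1)) has_real_derivative Y1 i y) (at 0)" for i y
  proof -
    have e: "(\<lambda>s. Y (y + s *\<^sub>R axis i 1)) = (\<lambda>s. \<Sum>\<alpha>\<in>S. cf \<alpha> * ((y $ i + s) ^ \<alpha> i * Rm \<alpha> i y))"
      by (simp add: Yeq mon_line)
    show ?thesis unfolding e Y1_def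
      by (auto intro!: derivative_eq_intros simp: algebra_simps)
  qed
  have d2: "((\<lambda>s. Y1 i (y + s *\<^sub>R axis i 1)) has_real_derivative Y2 i y) (at 0)" for i y
  proof -
    have e: "(\<lambda>s. Y1 i (y + s *\<^sub>R axis i 1)) = (\<lambda>s. \<Sum>\<alpha>\<in>S. cf \<alpha> * (real (\<alpha> i) * (y $ i + s) ^ (\<alpha> i - 1) * Rm \<alpha> i y))"
      by (simp add: Y1_def Rm_line line_comp)
    show ?thesis unfolding e Y2_def
      by (auto intro!: derivative_eq_intros simp: algebra_simps)
  qed
  have p1: "pdiff i Y = Y1 i" for i by (rule ext, rule pdiff_eq, rule d1)
  have p2: "pdiff i (Y1 i) = Y2 i" for i by (rule ext, rule pdiff_eq, rule d2)
  have h: "(\<Sum>i\<in>UNIV. Y2 i y) = 0" for y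
    using lap[of y] unfolding laplacian_def p1 p2 .
  have eu: "(\<Sum>i\<in>UNIV. y $ i * Y1 i y) = real p * Y y" for y
  proof -
    have t: "y $ i * (real (\<alpha> i) * (y $ i) ^ (\<alpha> i - 1) * Rm \<alpha> i y) = real (\<alpha> i) * mon \<alpha> y" for i \<alpha>
    proof (cases "\<alpha> i")
      case 0 then show ?thesis by simp
    next
      case (Suc r) then show ?thesis by (simp add: mon_split[of _ _ i])
    qed
    have t': "y $ i * (cf \<alpha> * (real (\<alpha> i) * (y $ i) ^ (\<alpha> i - 1) * Rm \<alpha> i y)) = cf \<alpha> * (real (\<alpha> i) * mon \<alpha> y)" for i \<alpha>
      using t[of i \<alpha>] by (metis mult.left_commute)
    have "(\<Sum>i\<in>UNIV. y $ i * Y1 i y) = (\<Sum>i\<in>UNIV. \<Sum>\<alpha>\<in>S. cf \<alpha> * (real (\<alpha> i) * mon \<alpha> y))"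
      unfolding Y1_def sum_distrib_left by (intro sum.cong refl) (rule t')
    also have "\<dots> = (\<Sum>\<alpha>\<in>S. cf \<alpha> * (real (sum \<alpha> UNIV) * mon \<alpha> y))"
      by (subst sum.swap) (simp add: sum_distrib_left[symmetric] sum_distrib_right[symmetric])
    also have "\<dots> = real p * Y y"
      unfolding Yeq sum_distrib_left by (intro sum.cong refl) (simp add: S_def)
    finally show ?thesis .
  qed
  show ?thesis using that d1 d2 h eu by blast
qed

lemma norm_line: "(norm (y + s *\<^sub>R axis i (1::real)))\<^sup>2 = (norm (y::real^'n::finite))\<^sup>2 + 2 * s * y $ i + s\<^sup>2"
proof -
  have "(norm (y + s *\<^sub>R axis i (1::real)))\<^sup>2 = inner y y + s * inner y (axis i 1) + s * inner (axis i 1) y + s * s * inner (axis i (1::real)) (axis i 1)"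
    unfolding power2_norm_eq_inner by (simp only: inner_add_left inner_add_right inner_scaleR_left inner_scaleR_right) (simp only: algebra_simps)
  also have "\<dots> = (norm y)\<^sup>2 + 2 * s * y $ i + s\<^sup>2"
    unfolding inner_axis inner_axis' inner_axis_axis dot_square_norm
    by (simp only: inner_real_def simp_thms(6) if_True mult_1_right mult_1_left power2_eq_square norm_axis_1)
  finally show ?thesis .
qed

lemma norm_sum: "(norm (x::real^'n::finite))\<^sup>2 = (\<Sum>i\<in>UNIV. (x $ i)\<^sup>2)"
  unfolding power2_norm_eq_inner inner_vec_def by (simp only: inner_real_def power2_eq_square)

lemma chain_rule_eq:
  assumes "\<And>r. DERIV f r :> f' r" "DERIV g x :> Db" "D = f' (g x) * Db"
  shows "DERIV (\<lambda>x. f (g x)) x :> D"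
  using DERIV_chain2[OF assms(1) assms(2)] assms(3) by simp

lemma deriv_eqI: "DERIV f x :> A \<Longrightarrow> A = B \<Longrightarrow> DERIV f x :> B" by simp

lemma lap:
  fixes Y :: "real^'n::finite \<Rightarrow> real"
  assumes "Y \<in> harmonic_hom p" and d\<Phi>: "\<And>r. DERIV \<Phi> r :> \<Phi>1 r" and d\<Phi>1: "\<And>r. DERIV \<Phi>1 r :> \<Phi>2 r"
  shows "laplacian (\<lambda>y. K * (\<Phi> ((norm y)\<^sup>2) * Y y)) x
     = K * (4 * (norm x)\<^sup>2 * \<Phi>2 ((norm x)\<^sup>2) + (2 * real CARD('n) + 4 * real p) * \<Phi>1 ((norm x)\<^sup>2)) * Y x"
proof -
  obtain Y1 Y2 where d1: "\<And>i y. ((\<lambda>s. Y (y + s *\<^sub>R axis i 1)) has_real_derivative Y1 i y) (at 0)"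
    and d2: "\<And>i y. ((\<lambda>s. Y1 i (y + s *\<^sub>R axis i 1)) has_real_derivative Y2 i y) (at 0)"
    and h: "\<And>y. (\<Sum>i\<in>UNIV. Y2 i y) = 0"
    and eu: "\<And>y. (\<Sum>i\<in>UNIV. y $ i * Y1 i y) = real p * Y y"
    using harm[OF assms(1)] by blast
  define g where "g = (\<lambda>y. K * (\<Phi> ((norm y)\<^sup>2) * Y y))"
  define P where "P i y = K * (\<Phi>1 ((norm y)\<^sup>2) * (2 * y $ i) * Y y + \<Phi> ((norm y)\<^sup>2) * Y1 i y)" for i y
  have q: "DERIV (\<lambda>s. (norm y)\<^sup>2 + 2 * s * y $ i + s\<^sup>2) 0 :> 2 * y $ i" for y :: "real^'n" and i
    by (auto intro!: derivative_eq_intros)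
  have pg: "pdiff i g y = P i y" for i y
  proof (rule pdiff_eq)
    have e: "(\<lambda>s. g (y + s *\<^sub>R axis i 1)) = (\<lambda>s. K * (\<Phi> ((norm y)\<^sup>2 + 2 * s * y $ i + s\<^sup>2) * Y (y + s *\<^sub>R axis i 1)))"
      unfolding g_def norm_line ..
    have a: "DERIV (\<lambda>s. \<Phi> ((norm y)\<^sup>2 + 2 * s * y $ i + s\<^sup>2)) 0 :> \<Phi>1 ((norm y)\<^sup>2) * (2 * y $ i)"
      by (rule chain_rule_eq[OF d\<Phi> q]) simp
    have b: "DERIV (\<lambda>s. \<Phi> ((norm y)\<^sup>2 + 2 * s * y $ i + s\<^sup>2) * Y (y + s *\<^sub>R axis i 1)) 0 :> P i y / K"
      if "K \<noteq> 0"
      by (rule deriv_eqI[OF DERIV_mult[OF a d1]]) (use that in \<open>simp add: P_def\<close>)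
    show "((\<lambda>s. g (y + s *\<^sub>R axis i 1)) has_real_derivative P i y) (at 0)"
    proof (cases "K = 0")
      case True then show ?thesis unfolding e P_def by simp
    next
      case False then show ?thesis unfolding e using DERIV_cmult[OF b[OF False], of K] by simp
    qed
  qed
  define P2 where "P2 i y = K * (\<Phi>2 ((norm y)\<^sup>2) * (2 * y $ i) * (2 * y $ i) * Y y + \<Phi>1 ((norm y)\<^sup>2) * 2 * Y y
     + 2 * (\<Phi>1 ((norm y)\<^sup>2) * (2 * y $ i) * Y1 i y) + \<Phi> ((norm y)\<^sup>2) * Y2 i y)" for i y
  have pp: "pdiff i (P i) y = P2 i y" for i y
  proof (rule pdiff_eq)
    have e: "(\<lambda>s. P i (y + s *\<^sub>R axis i 1)) = (\<lambda>s. K * (\<Phi>1 ((norm y)\<^sup>2 + 2 * s * y $ i + s\<^sup>2) * (2 * (y $ i + s)) * Y (y + s *\<^sub>R axis i 1)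
         + \<Phi> ((norm y)\<^sup>2 + 2 * s * y $ i + s\<^sup>2) * Y1 i (y + s *\<^sub>R axis i 1)))"
      unfolding P_def norm_line by (simp add: line_comp)
    have a: "DERIV (\<lambda>s. \<Phi> ((norm y)\<^sup>2 + 2 * s * y $ i + s\<^sup>2)) 0 :> \<Phi>1 ((norm y)\<^sup>2) * (2 * y $ i)"
      by (rule chain_rule_eq[OF d\<Phi> q]) simp
    have a1: "DERIV (\<lambda>s. \<Phi>1 ((norm y)\<^sup>2 + 2 * s * y $ i + s\<^sup>2)) 0 :> \<Phi>2 ((norm y)\<^sup>2) * (2 * y $ i)"
      by (rule chain_rule_eq[OF d\<Phi>1 q]) simp
    have l: "DERIV (\<lambda>s. 2 * (y $ i + s)) 0 :> 2" by (auto intro!: derivative_eq_intros)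
    note t1 = DERIV_mult[OF DERIV_mult[OF a1 l] d1]
    note t2 = DERIV_mult[OF a d2]
    note t3 = DERIV_cmult[OF DERIV_add[OF t1 t2], of K]
    show "((\<lambda>s. P i (y + s *\<^sub>R axis i 1)) has_real_derivative P2 i y) (at 0)"
      unfolding e by (rule deriv_eqI[OF t3]) (simp add: P2_def algebra_simps)
  qed
  have pg': "pdiff i g = P i" for i by (rule ext, rule pg)
  have "laplacian g x = (\<Sum>i\<in>UNIV. P2 i x)" unfolding laplacian_def pg' pp ..
  also have "\<dots> = (\<Sum>i\<in>UNIV. K * (4 * \<Phi>2 ((norm x)\<^sup>2) * Y x) * (x $ i)\<^sup>2 + K * (2 * \<Phi>1 ((norm x)\<^sup>2) * Y x)
       + K * (4 * \<Phi>1 ((norm x)\<^sup>2)) * (x $ i * Y1 i x) + K * \<Phi> ((norm x)\<^sup>2) * Y2 i x)"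
    unfolding P2_def by (intro sum.cong refl) (simp add: algebra_simps power2_eq_square)
  also have "\<dots> = K * (4 * \<Phi>2 ((norm x)\<^sup>2) * Y x) * (\<Sum>i\<in>UNIV. (x $ i)\<^sup>2) + real CARD('n) * (K * (2 * \<Phi>1 ((norm x)\<^sup>2) * Y x))
       + K * (4 * \<Phi>1 ((norm x)\<^sup>2)) * (\<Sum>i\<in>UNIV. x $ i * Y1 i x) + K * \<Phi> ((norm x)\<^sup>2) * (\<Sum>i\<in>UNIV. Y2 i x)"
    by (simp only: sum.distrib sum_distrib_left[symmetric] sum_constant) (simp only: ac_simps)
  also have "\<dots> = K * (4 * (norm x)\<^sup>2 * \<Phi>2 ((norm x)\<^sup>2) + (2 * real CARD('n) + 4 * real p) * \<Phi>1 ((norm x)\<^sup>2)) * Y x"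
    unfolding norm_sum[symmetric] eu h by (simp add: algebra_simps)
  finally show ?thesis unfolding g_def .
qed

lemma tderiv:
  assumes dL: "\<And>s. DERIV L s :> L s - L1 s" and dL1: "\<And>s. DERIV L1 s :> L1 s - L2 s"
    and dH: "\<And>s. DERIV H s :> H1 s" and dH1: "\<And>s. DERIV H1 s :> H2 s"
  shows "deriv (deriv (\<lambda>s. exp (-s) * (L s * H s * K))) t = exp (-t) * (L2 t * H t - 2 * L1 t * H1 t + L t * H2 t) * K"
proof -
  have d1: "DERIV (\<lambda>s. exp (-s) * (L s * H s * K)) s :> exp (-s) * (L s * H1 s - L1 s * H s) * K" for s
    by (rule deriv_eqI, (rule derivative_eq_intros dL dH refl)+) (simp add: algebra_simps)
  have e: "deriv (\<lambda>s. exp (-s) * (L s * H s * K)) = (\<lambda>s. exp (-s) * (L s * H1 s - L1 s * H s) * K)"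
    by (rule ext, rule DERIV_imp_deriv, rule d1)
  have d2: "DERIV (\<lambda>s. exp (-s) * (L s * H1 s - L1 s * H s) * K) t :> exp (-t) * (L2 t * H t - 2 * L1 t * H1 t + L t * H2 t) * K"
    by (rule deriv_eqI, (rule derivative_eq_intros dL dH dL1 dH1 refl)+) (simp add: algebra_simps)
  show ?thesis unfolding e by (rule DERIV_imp_deriv, rule d2)
qed

context
  fixes J' :: nat and \<beta> c :: real
  assumes cdef: "c = real (Suc J') + \<beta>"
begin

lemma J2c0: assumes "k \<le> J'"
  shows "ds (Suc J') (jc (Suc J') (-1) \<beta>) k - dw (jc (Suc J') (-1) \<beta>) k = - c * jc J' 0 \<beta> k"
proof -
  obtain q where kq: "J' = k + q" using assms le_Suc_ex by blast
  have e: "Suc J' - k = Suc q" using kq by auto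
  show ?thesis unfolding ds_def dw_def e
    using r1[OF kq cdef] r2[OF kq cdef] by (simp add: algebra_simps)
qed

lemma J2c: assumes "k \<le> Suc J'"
  shows "ds (Suc J') (jc (Suc J') (-1) \<beta>) k - dw (jc (Suc J') (-1) \<beta>) k = - c * jc J' 0 \<beta> k"
proof (cases "k \<le> J'")
  case True then show ?thesis by (rule J2c0)
next
  case False then have "k = Suc J'" using assms by simp
  then show ?thesis by (simp add: ds_def dw_def jc_def)
qed

lemma J2: "hv J' (\<lambda>k. ds (Suc J') (jc (Suc J') (-1) \<beta>) k - dw (jc (Suc J') (-1) \<beta>) k) w s = - c * hv J' (jc J' 0 \<beta>) w s"
  unfolding hv_scale by (rule hv_cong) (rule J2c, simp)

lemma J2b: "hv (J' - 1) (\<lambda>k. ds J' (\<lambda>k. ds (Suc J') (jc (Suc J') (-1) \<beta>) k - dw (jc (Suc J') (-1) \<beta>) k) k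
      - dw (\<lambda>k. ds (Suc J') (jc (Suc J') (-1) \<beta>) k - dw (jc (Suc J') (-1) \<beta>) k) k) w s
   = - c * hv (J' - 1) (\<lambda>k. ds J' (jc J' 0 \<beta>) k - dw (jc J' 0 \<beta>) k) w s"
proof -
  define g where "g = (\<lambda>k. ds (Suc J') (jc (Suc J') (-1) \<beta>) k - dw (jc (Suc J') (-1) \<beta>) k)"
  have gk: "g k = - c * jc J' 0 \<beta> k" if "k \<le> Suc J'" for k unfolding g_def by (rule J2c[OF that])
  have "hv (J' - 1) (\<lambda>k. ds J' g k - dw g k) w s = hv (J' - 1) (\<lambda>k. - c * (ds J' (jc J' 0 \<beta>) k - dw (jc J' 0 \<beta>) k)) w s"
  proof (rule hv_cong)
    fix k assume "k \<le> J' - 1"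
    then have "k \<le> Suc J'" "Suc k \<le> Suc J'" by auto
    then show "ds J' g k - dw g k = - c * (ds J' (jc J' 0 \<beta>) k - dw (jc J' 0 \<beta>) k)"
      unfolding ds_def dw_def using gk[of k] gk[of "Suc k"] by (simp add: algebra_simps)
  qed
  then show ?thesis unfolding g_def hv_scale .
qed

lemma J3c: assumes "k \<le> J'"
  shows "- 2 * c * jc J' 0 \<beta> k - 4 * c * (ds J' (jc J' 0 \<beta>) k - dw (jc J' 0 \<beta>) k)
     - 4 * (if k = 0 then 0 else dw (dw (jc (Suc J') (-1) \<beta>)) (k - 1))
     - 4 * dw (dw (jc (Suc J') (-1) \<beta>)) k - 4 * (\<beta> + 1) * dw (jc (Suc J') (-1) \<beta>) k
   = - 2 * c * (4 * real (Suc J') + 2 * \<beta> - 1) * jc J' 0 \<beta> k"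
proof -
  obtain q where kq: "J' = k + q" using assms le_Suc_ex by blast
  define B where "B = jc J' 0 \<beta> k"
  define B1 where "B1 = jc J' 0 \<beta> (Suc k)"
  define C1 where "C1 = jc (Suc J') (-1) \<beta> (Suc k)"
  define C2 where "C2 = jc (Suc J') (-1) \<beta> (Suc (Suc k))"
  have f2: "C1 * real (Suc k) = (c + real k) * B" unfolding C1_def B_def by (rule r2[OF kq cdef])
  have f3: "C2 * (real (Suc k))^2 * real (Suc (Suc k)) = (c + real k) * (c + real k + 1) * real q * B"
    unfolding C2_def B_def by (rule r3[OF kq cdef])
  have f4: "B1 * (real (Suc k))^2 = (c + real k) * real q * B" unfolding B1_def B_def by (rule r4[OF kq cdef])
  have sh: "(if k = 0 then 0 else dw (dw (jc (Suc J') (-1) \<beta>)) (k - 1)) = real k * real (Suc k) * C1"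
    unfolding C1_def dw_def by (cases k) auto
  have ee: "ds J' (jc J' 0 \<beta>) k - dw (jc J' 0 \<beta>) k = real q * B - real (Suc k) * B1"
    unfolding ds_def dw_def B_def B1_def using kq by simp
  have c2: "dw (dw (jc (Suc J') (-1) \<beta>)) k = real (Suc k) * real (Suc (Suc k)) * C2"
    unfolding C2_def dw_def by simp
  have c1: "dw (jc (Suc J') (-1) \<beta>) k = real (Suc k) * C1"
    unfolding C1_def dw_def by simp
  have nz: "real (Suc k) \<noteq> 0" "real (Suc (Suc k)) \<noteq> 0" by auto
  have C1v: "C1 = (c + real k) * B / real (Suc k)" using f2 nz by (simp add: field_simps del: of_nat_Suc)
  have C2v: "C2 = (c + real k) * (c + real k + 1) * real q * B / ((real (Suc k))^2 * real (Suc (Suc k)))"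
    using f3 nz by (simp add: field_simps del: of_nat_Suc)
  have B1v: "B1 = (c + real k) * real q * B / (real (Suc k))^2" using f4 nz by (simp add: field_simps del: of_nat_Suc)
  have cq: "real (Suc J') = real k + real q + 1" using kq by simp
  show ?thesis unfolding sh ee c2 c1 B_def[symmetric] C1v C2v B1v cq using nz cdef cq
    by (simp add: field_simps power2_eq_square del: of_nat_Suc) (simp add: algebra_simps)
qed

lemma J1c: assumes "k \<le> Suc J'"
  shows "(c + real (Suc J')) * jc (Suc J') (-1) \<beta> k = c * (jc (Suc J') 0 \<beta> k - jc J' 0 \<beta> k)"
proof (cases "k \<le> J'")
  case True
  then obtain q where kq: "J' = k + q" using le_Suc_ex by blast
  define B where "B = jc J' 0 \<beta> k"
  have f1: "jc (Suc J') (-1) \<beta> k * real (Suc q) = real k * B" unfolding B_def by (rule r1[OF kq cdef])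
  have f5: "c * real (Suc q) * jc (Suc J') 0 \<beta> k = real (k + q + 1) * (c + real k) * B" unfolding B_def by (rule r5[OF kq cdef])
  have nz: "real (Suc q) \<noteq> 0" by simp
  have C: "jc (Suc J') (-1) \<beta> k = real k * B / real (Suc q)" using f1 nz by (simp add: field_simps del: of_nat_Suc)
  have A: "c * jc (Suc J') 0 \<beta> k = real (k + q + 1) * (c + real k) * B / real (Suc q)" using f5 nz by (simp add: field_simps del: of_nat_Suc)
  have "c * (jc (Suc J') 0 \<beta> k - jc J' 0 \<beta> k) = c * jc (Suc J') 0 \<beta> k - c * B" unfolding B_def by (simp add: algebra_simps)
  also have "\<dots> = (c + real (Suc J')) * (real k * B / real (Suc q))"
    unfolding A using nz kq by (simp add: field_simps del: of_nat_Suc) (simp add: algebra_simps)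
  finally show ?thesis unfolding C by simp
next
  case False
  then have k: "k = Suc J'" using assms by simp
  have "jc J' 0 \<beta> k = 0" using k by (simp add: jc_def)
  moreover have "(real (Suc J') + \<beta>) * jc (Suc J') 0 \<beta> (Suc J') = (real (Suc J') + \<beta> + real (Suc J')) * jc (Suc J') (-1) \<beta> (Suc J')"
    by (rule r6)
  ultimately show ?thesis using k cdef by (simp add: algebra_simps)
qed

lemma hv_diff': "hv J a w s - hv J b w s = hv J (\<lambda>k. a k - b k) w s"
  unfolding hv_def by (simp add: sum_subtractf[symmetric] algebra_simps)

lemma J1: "(c + real (Suc J')) * hv (Suc J') (jc (Suc J') (-1) \<beta>) w s
   = c * (hv (Suc J') (jc (Suc J') 0 \<beta>) w s - s * hv J' (jc J' 0 \<beta>) w s)"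
proof -
  have eq: "s * hv J' (jc J' 0 \<beta>) w s = hv (Suc J') (jc J' 0 \<beta>) w s"
    using hv_s[of "jc J' 0 \<beta>" "Suc J'" s w] by (simp add: jc_def)
  show ?thesis unfolding eq unfolding hv_diff' hv_scale
    by (intro hv_cong) (rule J1c)
qed

lemma hv_diff: "hv J a w s - hv J b w s = hv J (\<lambda>k. a k - b k) w s"
  unfolding hv_def by (simp add: sum_subtractf[symmetric] algebra_simps)

lemma DH: "- 2 * c * hv J' (jc J' 0 \<beta>) w s - 4 * c * (s * hv (J' - 1) (\<lambda>k. ds J' (jc J' 0 \<beta>) k - dw (jc J' 0 \<beta>) k) w s)
     - 4 * (w + s) * hv (J' - 1) (dw (dw (jc (Suc J') (-1) \<beta>))) w s - 4 * (\<beta> + 1) * hv J' (dw (jc (Suc J') (-1) \<beta>)) w s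
   = - 2 * c * (4 * real (Suc J') + 2 * \<beta> - 1) * hv J' (jc J' 0 \<beta>) w s"
proof -
  define B where "B = jc J' 0 \<beta>"
  define C where "C = jc (Suc J') (-1) \<beta>"
  have s1: "s * hv (J' - 1) (\<lambda>k. ds J' B k - dw B k) w s = hv J' (\<lambda>k. ds J' B k - dw B k) w s"
    by (rule hv_s) (simp add: ds_def dw_def B_def jc_def)
  have s2: "s * hv (J' - 1) (dw (dw C)) w s = hv J' (dw (dw C)) w s"
    by (rule hv_s) (simp add: dw_def C_def jc_def)
  have s3: "w * hv (J' - 1) (dw (dw C)) w s = hv J' (\<lambda>k. if k = 0 then 0 else dw (dw C) (k - 1)) w s"
    by (rule hv_w) (simp add: dw_def C_def jc_def)
  have "- 2 * c * hv J' B w s - 4 * c * (s * hv (J' - 1) (\<lambda>k. ds J' B k - dw B k) w s)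
     - 4 * (w + s) * hv (J' - 1) (dw (dw C)) w s - 4 * (\<beta> + 1) * hv J' (dw C) w s
     = - 2 * c * hv J' B w s - 4 * c * hv J' (\<lambda>k. ds J' B k - dw B k) w s
       - 4 * hv J' (\<lambda>k. if k = 0 then 0 else dw (dw C) (k - 1)) w s - 4 * hv J' (dw (dw C)) w s
       - 4 * (\<beta> + 1) * hv J' (dw C) w s"
    unfolding s1 s2[symmetric] s3[symmetric] by (simp add: algebra_simps)
  also have "\<dots> = hv J' (\<lambda>k. - 2 * c * B k - 4 * c * (ds J' B k - dw B k)
     - 4 * (if k = 0 then 0 else dw (dw C) (k - 1))
     - 4 * dw (dw C) k - 4 * (\<beta> + 1) * dw C k) w s"
    by (simp only: hv_scale hv_diff)
  also have "\<dots> = hv J' (\<lambda>k. - 2 * c * (4 * real (Suc J') + 2 * \<beta> - 1) * B k) w s"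
    unfolding B_def C_def by (rule hv_cong, rule J3c)
  finally show ?thesis unfolding B_def C_def hv_scale .
qed

end

lemma d_pos: "CARD('n::finite) \<ge> 1"
  by (simp add: Suc_leI)

theorem theorem2p5:
  fixes Y :: "real^'n::finite \<Rightarrow> real" and n m j :: nat and x :: "real^'n" and t :: real
  assumes "m \<le> n" and "2 * j \<le> m" and "Y \<in> harmonic_hom (m - 2 * j)"
  shows "exp t * (deriv (deriv (\<lambda>s. exp (- s) * Qpoly n m j (-1) Y x s)) t
                  - laplacian (\<lambda>y. exp (- t) * Qpoly n m j (-1) Y y t) x)
         = acoef CARD('n) m j * (Qpoly n m j 0 Y x t
             - (if j = 0 then 0 else bcoef m n * Qpoly n (m - 2) (j - 1) 0 Y x t))"
proof -
  define d where "d = CARD('n)"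
  define N where "N = n - m"
  define \<gamma> where "\<gamma> = 2 * real m + 2 * (-1) + real d"
  define \<beta> where "\<beta> = real m - 2 * real j + (real d - 2) / 2"
  define \<rho> where "\<rho> = (norm x)\<^sup>2"
  define C where "C = jc j (-1) \<beta>"
  define g where "g = (\<lambda>k. ds j C k - dw C k)"
  define g2 where "g2 = (\<lambda>k. ds (j - 1) g k - dw g k)"
  define H where "H s = hv j C (\<rho> - s\<^sup>2) (s\<^sup>2)" for s
  define G where "G s = hv (j - 1) g (\<rho> - s\<^sup>2) (s\<^sup>2)" for s
  define H1 where "H1 s = 2 * s * G s" for s
  define H2 where "H2 s = 2 * G s + 2 * s * (2 * s * hv (j - 1 - 1) g2 (\<rho> - s\<^sup>2) (s\<^sup>2))" for s
  define \<Phi> where "\<Phi> r = hv j C (r - t\<^sup>2) (t\<^sup>2)" for r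
  define \<Phi>1 where "\<Phi>1 r = hv (j - 1) (dw C) (r - t\<^sup>2) (t\<^sup>2)" for r
  define \<Phi>2 where "\<Phi>2 r = hv (j - 1 - 1) (dw (dw C)) (r - t\<^sup>2) (t\<^sup>2)" for r
  define L where "L = laguerre N \<gamma> t"
  define L1 where "L1 = laguerre N (\<gamma> + 1) t"
  define L2 where "L2 = laguerre N (\<gamma> + 1 + 1) t"
  have Qm1: "Qpoly n m j (-1) Y y s = laguerre N \<gamma> s * hv j C ((norm y)\<^sup>2 - s\<^sup>2) (s\<^sup>2) * Y y" for y s
    unfolding Qpoly_def hjacobi_hv \<gamma>_def \<beta>_def N_def d_def C_def by simp
  have vbC: "vb j C" unfolding C_def by (rule vb_jc)
  have vbg: "vb (j - 1) g" unfolding g_def by (rule vb_dsdw[OF vbC])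
  have dH: "DERIV H s :> H1 s" for s
    unfolding H_def H1_def G_def g_def by (rule hv_t[OF vbC])
  have dG: "DERIV G s :> 2 * s * hv (j - 1 - 1) g2 (\<rho> - s\<^sup>2) (s\<^sup>2)" for s
    unfolding G_def g2_def by (rule hv_t[OF vbg])
  have dH1: "DERIV H1 s :> H2 s" for s
  proof -
    have "DERIV (\<lambda>s. 2 * s) s :> 2" by (auto intro!: derivative_eq_intros)
    from DERIV_mult[OF this dG[of s]] show ?thesis unfolding H1_def[abs_def] H2_def
      by (simp add: algebra_simps)
  qed
  have T: "deriv (deriv (\<lambda>s. exp (- s) * Qpoly n m j (-1) Y x s)) t
      = exp (-t) * (L2 * H t - 2 * L1 * H1 t + L * H2 t) * Y x"
  proof -
    have e: "(\<lambda>s. exp (- s) * Qpoly n m j (-1) Y x s) = (\<lambda>s. exp (- s) * (laguerre N \<gamma> s * H s * Y x))"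
      unfolding Qm1 H_def \<rho>_def ..
    show ?thesis unfolding e L_def L1_def L2_def
      by (rule tderiv[OF laguerre_deriv laguerre_deriv dH dH1])
  qed
  have dPhi: "DERIV \<Phi> r :> \<Phi>1 r" for r unfolding \<Phi>_def \<Phi>1_def by (rule hv_r[OF vbC])
  have dPhi1: "DERIV \<Phi>1 r :> \<Phi>2 r" for r unfolding \<Phi>1_def \<Phi>2_def by (rule hv_r[OF vb_dw[OF vbC]])
  have Lap: "laplacian (\<lambda>y. exp (- t) * Qpoly n m j (-1) Y y t) x
      = exp (- t) * L * (4 * \<rho> * \<Phi>2 \<rho> + (2 * real d + 4 * real (m - 2 * j)) * \<Phi>1 \<rho>) * Y x"
  proof -
    have e: "(\<lambda>y. exp (- t) * Qpoly n m j (-1) Y y t) = (\<lambda>y. (exp (- t) * L) * (\<Phi> ((norm y)\<^sup>2) * Y y))"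
      unfolding Qm1 \<Phi>_def L_def by (simp add: algebra_simps)
    show ?thesis unfolding e \<rho>_def d_def by (rule lap[OF assms(3) dPhi dPhi1])
  qed
  have Hr: "H t = \<Phi> \<rho>" unfolding H_def \<Phi>_def ..
  have LHS: "exp t * (deriv (deriv (\<lambda>s. exp (- s) * Qpoly n m j (-1) Y x s)) t
                  - laplacian (\<lambda>y. exp (- t) * Qpoly n m j (-1) Y y t) x)
        = (L2 * H t - 2 * L1 * H1 t + L * (H2 t - 4 * \<rho> * \<Phi>2 \<rho> - (2 * real d + 4 * real (m - 2 * j)) * \<Phi>1 \<rho>)) * Y x"
    unfolding T Lap by (simp add: exp_minus field_simps)
  have dge: "real d \<ge> 1" unfolding d_def using d_pos by simp
  show ?thesis
  proof (cases j)
    case 0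
    have h0: "H t = 1" unfolding H_def C_def 0 by (simp add: hv_def jc_def)
    have h1: "H1 t = 0" unfolding H1_def G_def g_def C_def 0 by (simp add: hv_def jc_def ds_def dw_def)
    have h2: "H2 t = 0" unfolding H2_def G_def g2_def g_def C_def 0 by (simp add: hv_def jc_def ds_def dw_def)
    have p1: "\<Phi>1 \<rho> = 0" unfolding \<Phi>1_def C_def 0 by (simp add: hv_def jc_def dw_def)
    have p2: "\<Phi>2 \<rho> = 0" unfolding \<Phi>2_def C_def 0 by (simp add: hv_def jc_def dw_def)
    have Q0: "Qpoly n m j 0 Y x t = laguerre N (\<gamma> + 1 + 1) t * Y x"
      unfolding Qpoly_def 0 N_def \<gamma>_def d_def by (simp add: hjacobi_def algebra_simps)
    have a0: "acoef CARD('n) m j = 1"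
    proof -
      have "2 * real m + real d - 2 \<noteq> 0" if "\<not> (m = 0 \<and> d = 2)"
      proof (cases "m = 0")
        case True
        then have "real d \<noteq> 2" using that by simp
        then show ?thesis using True by simp
      next
        case False
        then have "real m \<ge> 1" by simp
        then show ?thesis using dge by linarith
      qed
      then show ?thesis unfolding acoef_def 0 d_def[symmetric] by auto
    qed
    show ?thesis unfolding LHS h0 h1 h2 p1 p2 a0 Q0 L2_def using 0 by simp
  next
    case (Suc J')
    have m2: "m \<ge> 2" using assms(2) Suc by simp
    define c where "c = real (Suc J') + \<beta>"
    define w where "w = \<rho> - t\<^sup>2"
    define HB where "HB = hv J' (jc J' 0 \<beta>) w (t\<^sup>2)"
    define HA where "HA = hv (Suc J') (jc (Suc J') 0 \<beta>) w (t\<^sup>2)"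
    define Ge where "Ge = hv (J' - 1) (\<lambda>k. ds J' (jc J' 0 \<beta>) k - dw (jc J' 0 \<beta>) k) w (t\<^sup>2)"
    define Lm where "Lm = laguerre (Suc (Suc N)) (\<gamma> - 2) t"
    have cdef: "c = real (Suc J') + \<beta>" by (simp add: c_def)
    have Gt: "G t = - c * HB" unfolding G_def g_def C_def Suc HB_def w_def diff_Suc_1 by (rule J2[OF cdef])
    have G2: "hv (j - 1 - 1) g2 (\<rho> - t\<^sup>2) (t\<^sup>2) = - c * Ge"
      unfolding g2_def g_def C_def Suc Ge_def w_def diff_Suc_1 by (rule J2b[OF cdef])
    have h1: "H1 t = 2 * t * (- c * HB)" unfolding H1_def Gt ..
    have h2: "H2 t = 2 * (- c * HB) + 2 * t * (2 * t * (- c * Ge))" unfolding H2_def Gt G2 ..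
    have dh: "- 2 * c * HB - 4 * c * (t\<^sup>2 * Ge) - 4 * (w + t\<^sup>2) * \<Phi>2 \<rho> - 4 * (\<beta> + 1) * \<Phi>1 \<rho>
       = - 2 * c * (4 * real (Suc J') + 2 * \<beta> - 1) * HB"
      unfolding HB_def Ge_def \<Phi>1_def \<Phi>2_def Suc diff_Suc_1 C_def w_def[symmetric] by (rule DH[OF cdef])
    have j1: "(c + real (Suc J')) * H t = c * (HA - t\<^sup>2 * HB)"
      unfolding H_def HA_def HB_def C_def Suc w_def by (rule J1[OF cdef])
    have lb: "t\<^sup>2 * L2 - 2 * \<gamma> * t * L1 + \<gamma> * (\<gamma> - 1) * L = real (Suc N) * real (Suc (Suc N)) * Lm"
      unfolding L_def L1_def L2_def Lm_def using laguerre_Lb[of t N \<gamma>] by (simp add: algebra_simps)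
    have QA: "Qpoly n m j 0 Y x t = L2 * HA * Y x"
      unfolding Qpoly_def L2_def HA_def hjacobi_hv N_def \<gamma>_def d_def \<beta>_def w_def \<rho>_def Suc by (simp add: algebra_simps)
    have QB: "Qpoly n (m - 2) (j - 1) 0 Y x t = Lm * HB * Y x"
    proof -
      have "n - (m - 2) = Suc (Suc N)" unfolding N_def using m2 assms(1) by simp
      moreover have "2 * real (m - 2) + 2 * 0 + real CARD('n) = \<gamma> - 2" unfolding \<gamma>_def d_def using m2 by (simp add: of_nat_diff)
      moreover have "real (m - 2) - 2 * real (j - 1) + (real CARD('n) - 2) / 2 = \<beta>" unfolding \<beta>_def d_def Suc using m2 by (simp add: of_nat_diff)
      ultimately show ?thesis unfolding Qpoly_def Lm_def HB_def hjacobi_hv w_def \<rho>_def Suc by simp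
    qed
    have ac: "acoef CARD('n) m j = c / (c + real (Suc J'))"
    proof -
      have "m \<noteq> 0" using m2 by simp
      then have "acoef CARD('n) m j = (2 * real m - 2 * real j + real d - 2) / (2 * real m + real d - 2)"
        unfolding acoef_def d_def by simp
      also have "\<dots> = (2 * c) / (2 * (c + real (Suc J')))"
      proof -
        have "2 * c = 2 * real m - 2 * real j + real d - 2" "2 * (c + real (Suc J')) = 2 * real m + real d - 2"
          unfolding c_def \<beta>_def Suc by (simp_all add: field_simps)
        then show ?thesis by simp
      qed
      also have "\<dots> = c / (c + real (Suc J'))" by (rule mult_divide_mult_cancel_left) simp
      finally show ?thesis .
    qed
    have bc: "bcoef m n = real (Suc N) * real (Suc (Suc N))" unfolding bcoef_def N_def using assms(1) by (simp add: of_nat_diff algebra_simps)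
    have pp: "2 * real d + 4 * real (m - 2 * j) = 4 * (\<beta> + 1)" unfolding \<beta>_def using assms(2) by (simp add: of_nat_diff field_simps)
    have gg: "\<gamma> = 2 * (c + real (Suc J'))" "4 * real (Suc J') + 2 * \<beta> - 1 = \<gamma> - 1"
      unfolding \<gamma>_def c_def \<beta>_def Suc by (simp_all add: field_simps)
    have cpos: "c + real (Suc J') > 0"
    proof -
      have "c + real (Suc J') = real m + (real d - 2) / 2" unfolding c_def \<beta>_def Suc by simp
      moreover have "real m \<ge> 2" using m2 by simp
      moreover have "real m + (real d - 2) / 2 > 0" using \<open>real m \<ge> 2\<close> dge by (simp add: field_simps)
      ultimately show ?thesis by simp
    qed
    have wr: "w + t\<^sup>2 = \<rho>" unfolding w_def by simp
    have X: "H2 t - 4 * \<rho> * \<Phi>2 \<rho> - (2 * real d + 4 * real (m - 2 * j)) * \<Phi>1 \<rho> = - 2 * c * (\<gamma> - 1) * HB"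
      using dh unfolding h2 pp wr gg(2) by (simp add: algebra_simps power2_eq_square)
    have Hv: "H t = c * (HA - t\<^sup>2 * HB) / (c + real (Suc J'))" using j1 cpos by (simp add: field_simps)
    have Lmv: "Lm = (t\<^sup>2 * L2 - 2 * \<gamma> * t * L1 + \<gamma> * (\<gamma> - 1) * L) / (real (Suc N) * real (Suc (Suc N)))"
      using lb by (simp add: field_simps del: of_nat_Suc)
    have R: "bcoef m n * Qpoly n (m - 2) (j - 1) 0 Y x t = (t\<^sup>2 * L2 - 2 * \<gamma> * t * L1 + \<gamma> * (\<gamma> - 1) * L) * HB * Y x"
      unfolding QB bc lb by (simp add: algebra_simps)
    have K0: "c + real (Suc J') \<noteq> 0" using cpos by simp
    show ?thesis unfolding LHS X h1 QA R ac Hv gg(1) using Suc K0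
      by (simp add: field_simps del: of_nat_Suc)
  qed
qed

end
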